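(* Let $f$ be a multiplicative function from the positive integers to the nonnegative integers with $f(p^{k-1})\le f(p^k)$ for all primes $p$ and integers $k\ge1$. Let $n$ be $f$-practical, let $p$ be a prime with $\gcd(p,n)=1$, and let $k\ge1$. Then $np^k$ is $f$-practical if and only if $f(p^i)\le S_f(np^{i-1})+1$ for all $1\le i\le k$.
   Context: $f$ multiplicative means $f(1)=1$ and $f(ab)=f(a)f(b)$ for coprime $a,b$. $S_f(n)=\sum_{d\mid n} f(d)$. A positive integer $n$ is $f$-practical if every positive integer $m\le S_f(n)$ equals $\sum_{d\in\mathcal{D}}f(d)$ for some set $\mathcal{D}$ of distinct divisors of $n$. *)

theory Defs
  imports "HOL-Computational_Algebra.Primes"
begin

definition multiplicative :: "(nat \<Rightarrow> nat) \<Rightarrow> bool" where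
  "multiplicative f \<longleftrightarrow> f 1 = 1 \<and>
     (\<forall>a b. 0 < a \<longrightarrow> 0 < b \<longrightarrow> coprime a b \<longrightarrow> f (a * b) = f a * f b)"

definition S_f :: "(nat \<Rightarrow> nat) \<Rightarrow> nat \<Rightarrow> nat" where
  "S_f f n = (\<Sum>d | d dvd n. f d)"

definition f_practical :: "(nat \<Rightarrow> nat) \<Rightarrow> nat \<Rightarrow> bool" where
  "f_practical f n \<longleftrightarrow> 0 < n \<and>
     (\<forall>m. 0 < m \<and> m \<le> S_f f n \<longrightarrow>
        (\<exists>D. D \<subseteq> {d. d dvd n} \<and> m = (\<Sum>d\<in>D. f d)))"

end

theory Submission
  imports Defs
begin

lemma npos:
  fixes p n :: nat
  assumes "prime p" "coprime p n"
  shows "n > 0"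
proof (rule ccontr)
  assume "\<not> n > 0"
  hence "n = 0" by simp
  hence "p = 1" using assms(2) by simp
  thus False using assms(1) by simp
qed

lemma decomp:
  fixes n p k x :: nat
  assumes "prime p" "coprime p n" "x dvd n * p ^ k"
  shows "\<exists>y j. y dvd n \<and> j \<le> k \<and> x = y * p ^ j"
proof -
  have n0: "n > 0" by (rule npos[OF assms(1,2)])
  have pp: "p > 0" using assms(1) prime_gt_0_nat by blast
  have "n * p ^ k \<noteq> 0" using n0 pp by simp
  hence x0: "x \<noteq> 0" using assms(3) by (metis dvd_0_left_iff)
  have nu: "\<not> is_unit p" using assms(1) not_prime_unit by blast
  obtain y where y: "x = p ^ multiplicity p x * y" "\<not> p dvd y"
    by (rule multiplicity_decompose'[OF x0 nu])
  define j where "j = multiplicity p x"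
  have "coprime p y" using y(2) assms(1) by (simp add: prime_imp_coprime)
  hence cy: "coprime y (p ^ k)" by (simp add: coprime_commute)
  have "y dvd x" using y(1) by (metis dvd_triv_right)
  hence "y dvd n * p ^ k" using assms(3) by (rule dvd_trans)
  hence yd: "y dvd n" using cy coprime_dvd_mult_left_iff by blast
  have "p ^ j dvd x" using y(1) j_def by (metis dvd_triv_left)
  hence "p ^ j dvd n * p ^ k" using assms(3) by (rule dvd_trans)
  moreover have "coprime (p ^ j) n" using assms(2) by simp
  ultimately have "p ^ j dvd p ^ k" using coprime_dvd_mult_right_iff by blast
  hence "j \<le> k" using power_dvd_imp_le prime_gt_1_nat[OF assms(1)] by blast
  thus ?thesis using yd y(1) j_def by (metis mult.commute)
qed

lemma fin_div: "(0::nat) < n \<Longrightarrow> finite {d. d dvd n}"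
  by simp

lemma S_split:
  fixes f :: "nat \<Rightarrow> nat" and n p i :: nat
  assumes mf: "multiplicative f" and pr: "prime p" and cp: "coprime p n" and i1: "1 \<le> i"
  shows "S_f f (n * p ^ i) = S_f f (n * p ^ (i - 1)) + f (p ^ i) * S_f f n"
proof -
  have n0: "n > 0" using pr cp
    by (metis coprime_0_right_iff gr0I not_prime_unit)
  have pp: "p > 0" using pr prime_gt_0_nat by blast
  have pi: "p ^ i = p ^ (i - 1) * p" using i1 by (metis Suc_diff_le diff_Suc_1 power_Suc2)
  let ?A = "{d. d dvd n * p ^ (i - 1)}"
  let ?B = "(\<lambda>d. d * p ^ i) ` {d. d dvd n}"
  have eq: "{d. d dvd n * p ^ i} = ?A \<union> ?B"
  proof (intro set_eqI iffI)
    fix x assume "x \<in> {d. d dvd n * p ^ i}"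
    then obtain y j where yj: "y dvd n" "j \<le> i" "x = y * p ^ j"
      using decomp[OF pr cp] by blast
    show "x \<in> ?A \<union> ?B"
    proof (cases "j = i")
      case True thus ?thesis using yj by auto
    next
      case False
      hence "p ^ j dvd p ^ (i - 1)" using yj(2) by (simp add: le_imp_power_dvd)
      hence "x dvd n * p ^ (i - 1)" using yj by (simp add: mult_dvd_mono)
      thus ?thesis by simp
    qed
  next
    fix x assume "x \<in> ?A \<union> ?B"
    moreover have "n * p ^ (i - 1) dvd n * p ^ i" using pi by simp
    ultimately show "x \<in> {d. d dvd n * p ^ i}" by (auto intro: dvd_trans mult_dvd_mono)
  qed
  have disj: "?A \<inter> ?B = {}"
  proof (rule ccontr)
    assume "?A \<inter> ?B \<noteq> {}"
    then obtain d where d: "d dvd n" "d * p ^ i dvd n * p ^ (i - 1)" by auto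
    hence "p ^ (i - 1) * p dvd n * p ^ (i - 1)" using pi by (metis dvd_mult_left mult.commute)
    hence "p dvd n" using pp by (simp add: mult.commute)
    thus False using cp pr by (metis coprime_absorb_left not_prime_unit)
  qed
  have inj: "inj_on (\<lambda>d. d * p ^ i) {d. d dvd n}" using pp by (auto simp: inj_on_def)
  have fA: "finite ?A" using n0 pp by simp
  have fB: "finite ?B" using n0 by simp
  have "S_f f (n * p ^ i) = sum f ?A + sum f ?B"
    unfolding S_f_def eq using sum.union_disjoint[OF fA fB disj] by simp
  also have "sum f ?B = (\<Sum>d | d dvd n. f (d * p ^ i))"
    using sum.reindex[OF inj] by simp
  also have "\<dots> = (\<Sum>d | d dvd n. f (p ^ i) * f d)"
  proof (rule sum.cong)
    fix d assume "d \<in> {d. d dvd n}"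
    hence dd: "d dvd n" by simp
    hence "d > 0" using n0 by (metis dvd_0_left_iff gr0I not_gr0)
    moreover have "coprime d (p ^ i)" using dd cp
      by (metis coprime_commute coprime_power_right_iff coprime_imp_coprime dvd_trans dvd_refl)
    ultimately show "f (d * p ^ i) = f (p ^ i) * f d"
      using mf pp unfolding multiplicative_def by (simp add: mult.commute)
  qed simp
  also have "\<dots> = f (p ^ i) * S_f f n" unfolding S_f_def by (simp add: sum_distrib_left)
  finally show ?thesis unfolding S_f_def by simp
qed

lemma rep:
  assumes "f_practical f n" "m \<le> S_f f n"
  shows "\<exists>D. D \<subseteq> {d. d dvd n} \<and> m = sum f D"
proof (cases "m = 0")
  case True thus ?thesis by (intro exI[of _ "{}"]) simp
next
  case False thus ?thesis using assms unfolding f_practical_def by auto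
qed

lemma step:
  fixes f :: "nat \<Rightarrow> nat" and n p i :: nat
  assumes mf: "multiplicative f" and pr: "prime p" and cp: "coprime p n" and i1: "1 \<le> i"
    and fn: "f_practical f n" and fm: "f_practical f (n * p ^ (i - 1))"
    and le: "f (p ^ i) \<le> S_f f (n * p ^ (i - 1)) + 1" and q1: "1 \<le> f (p ^ i)"
  shows "f_practical f (n * p ^ i)"
proof -
  have n0: "n > 0" using pr cp
    by (metis coprime_0_right_iff gr0I not_prime_unit)
  have pp: "p > 0" using pr prime_gt_0_nat by blast
  have pi: "p ^ i = p ^ (i - 1) * p" using i1 by (metis Suc_diff_le diff_Suc_1 power_Suc2)
  define q where "q = f (p ^ i)"
  define A where "A = S_f f (n * p ^ (i - 1))"
  define B where "B = S_f f n"
  have SS: "S_f f (n * p ^ i) = A + q * B"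
    unfolding A_def B_def q_def using S_split[OF mf pr cp i1] by simp
  have q0: "q > 0" using q1 q_def by simp
  show ?thesis unfolding f_practical_def
  proof (intro conjI allI impI)
    show "0 < n * p ^ i" using n0 pp by simp
    fix m assume m: "0 < m \<and> m \<le> S_f f (n * p ^ i)"
    define t where "t = min (m div q) B"
    define r where "r = m - q * t"
    have qt: "q * t \<le> m" unfolding t_def
      by (metis min.cobounded1 mult.commute mult_le_mono2 div_times_less_eq_dividend order_trans)
    have rA: "r \<le> A"
    proof (cases "m div q \<le> B")
      case True
      hence "t = m div q" unfolding t_def by simp
      hence "r = m mod q" unfolding r_def by (metis minus_mult_div_eq_mod)
      thus ?thesis using le q0 unfolding q_def[symmetric] A_def[symmetric]
        by (metis Suc_eq_plus1 less_Suc_eq_le mod_less_divisor order_less_le_trans)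
    next
      case False
      hence "t = B" unfolding t_def by simp
      thus ?thesis using m SS unfolding r_def by (simp add: le_diff_conv add.commute)
    qed
    obtain E where E: "E \<subseteq> {d. d dvd n}" "t = sum f E"
      using rep[OF fn, of t] unfolding t_def B_def by auto
    obtain D1 where D1: "D1 \<subseteq> {d. d dvd n * p ^ (i - 1)}" "r = sum f D1"
      using rep[OF fm, of r] rA unfolding A_def by auto
    let ?D2 = "(\<lambda>d. d * p ^ i) ` E"
    have inj: "inj_on (\<lambda>d. d * p ^ i) E" using pp by (auto simp: inj_on_def)
    have fE: "finite E" using E(1) n0 by (metis finite_subset fin_div)
    have fD1: "finite D1" using D1(1) n0 pp by (metis finite_subset fin_div nat_0_less_mult_iff zero_less_power)
    have disj: "D1 \<inter> ?D2 = {}"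
    proof (rule ccontr)
      assume "D1 \<inter> ?D2 \<noteq> {}"
      then obtain d where d: "d dvd n" "d * p ^ i dvd n * p ^ (i - 1)" using D1(1) E(1) by auto
      hence "p ^ (i - 1) * p dvd n * p ^ (i - 1)" using pi by (metis dvd_mult_left mult.commute)
      hence "p dvd n" using pp by (simp add: mult.commute)
      thus False using cp pr by (metis coprime_absorb_left not_prime_unit)
    qed
    have s2: "sum f ?D2 = q * t"
    proof -
      have "sum f ?D2 = (\<Sum>d\<in>E. f (d * p ^ i))" using sum.reindex[OF inj] by simp
      also have "\<dots> = (\<Sum>d\<in>E. q * f d)"
      proof (rule sum.cong)
        fix d assume "d \<in> E"
        hence dd: "d dvd n" using E(1) by auto
        hence "d > 0" using n0 by (metis dvd_0_left_iff gr0I not_gr0)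
        moreover have "coprime d (p ^ i)" using dd cp
          by (metis coprime_commute coprime_power_right_iff coprime_imp_coprime dvd_trans)
        ultimately show "f (d * p ^ i) = q * f d"
          using mf pp unfolding multiplicative_def q_def by (simp add: mult.commute)
      qed simp
      finally show ?thesis using E(2) by (simp add: sum_distrib_left)
    qed
    have "sum f (D1 \<union> ?D2) = sum f D1 + sum f ?D2"
      by (rule sum.union_disjoint[OF fD1 finite_imageI[OF fE] disj])
    also have "\<dots> = r + q * t" using D1(2) s2 by simp
    also have "\<dots> = m" using qt r_def by simp
    finally have "m = sum f (D1 \<union> ?D2)" by simp
    moreover have "D1 \<union> ?D2 \<subseteq> {d. d dvd n * p ^ i}"
    proof
      fix x assume "x \<in> D1 \<union> ?D2"
      moreover have "n * p ^ (i - 1) dvd n * p ^ i" using pi by simp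
      ultimately show "x \<in> {d. d dvd n * p ^ i}" using D1(1) E(1)
        by (auto intro: dvd_trans mult_dvd_mono)
    qed
    ultimately show "\<exists>D. D \<subseteq> {d. d dvd n * p ^ i} \<and> m = sum f D" by blast
  qed
qed

lemma fmono:
  fixes f :: "nat \<Rightarrow> nat"
  assumes "\<And>q j. prime q \<Longrightarrow> 1 \<le> j \<Longrightarrow> f (q ^ (j - 1)) \<le> f (q ^ j)"
    and "prime p" and "i \<le> j"
  shows "f (p ^ i) \<le> f (p ^ j)"
  using assms(3)
proof (induction j rule: dec_induct)
  case base thus ?case by simp
next
  case (step j)
  have "f (p ^ (Suc j - 1)) \<le> f (p ^ Suc j)" using assms(1)[OF assms(2), of "Suc j"] by simp
  thus ?case using step by simp
qed

lemma notdvd: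
  fixes n p i :: nat
  assumes pr: "prime p" and cp: "coprime p n" and i1: "1 \<le> i"
  shows "\<not> p ^ i dvd n * p ^ (i - 1)"
proof
  assume h: "p ^ i dvd n * p ^ (i - 1)"
  have pp: "p > 0" using pr prime_gt_0_nat by blast
  have pi: "p ^ i = p ^ (i - 1) * p" using i1 by (metis Suc_diff_le diff_Suc_1 power_Suc2)
  hence "p ^ (i - 1) * p dvd n * p ^ (i - 1)" using h by simp
  hence "p dvd n" using pp by (simp add: mult.commute)
  thus False using cp pr by (metis coprime_absorb_left not_prime_unit)
qed

theorem theorem2p5:
  fixes f :: "nat \<Rightarrow> nat" and n p k :: nat
  assumes "multiplicative f"
    and "\<And>q j. prime q \<Longrightarrow> 1 \<le> j \<Longrightarrow> f (q ^ (j - 1)) \<le> f (q ^ j)"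
    and "f_practical f n"
    and "prime p" and "coprime p n"
    and "1 \<le> k"
  shows "f_practical f (n * p ^ k) \<longleftrightarrow>
           (\<forall>i. 1 \<le> i \<and> i \<le> k \<longrightarrow> f (p ^ i) \<le> S_f f (n * p ^ (i - 1)) + 1)"
proof -
  note mf = assms(1) and pr = assms(4) and cp = assms(5) and fn = assms(3)
  have n0: "n > 0" using pr cp
    by (metis coprime_0_right_iff gr0I not_prime_unit)
  have pp: "p > 0" using pr prime_gt_0_nat by blast
  have f1: "f 1 = 1" using mf unfolding multiplicative_def by simp
  have qpos: "1 \<le> f (p ^ i)" for i
    using fmono[OF assms(2) pr, of 0 i] f1 by simp
  show ?thesis
  proof
    assume FN: "f_practical f (n * p ^ k)"
    show "\<forall>i. 1 \<le> i \<and> i \<le> k \<longrightarrow> f (p ^ i) \<le> S_f f (n * p ^ (i - 1)) + 1"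
    proof (intro allI impI, rule ccontr)
      fix i assume i: "1 \<le> i \<and> i \<le> k" and nle: "\<not> f (p ^ i) \<le> S_f f (n * p ^ (i - 1)) + 1"
      define A where "A = S_f f (n * p ^ (i - 1))"
      define q where "q = f (p ^ i)"
      let ?A = "{d. d dvd n * p ^ (i - 1)}"
      let ?N = "{d. d dvd n * p ^ k}"
      have fN: "finite ?N" using n0 pp by simp
      have fA: "finite ?A" using n0 pp by simp
      have AN: "?A \<subseteq> ?N"
      proof
        fix x assume "x \<in> ?A"
        moreover have "p ^ (i - 1) dvd p ^ k" using i by (intro le_imp_power_dvd) linarith
        ultimately show "x \<in> ?N" by (auto intro: dvd_trans mult_dvd_mono)
      qed
      have piN: "p ^ i \<in> ?N" using i by (simp add: le_imp_power_dvd)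
      have piA: "p ^ i \<notin> ?A" using notdvd[OF pr cp] i by simp
      have "A + q = sum f (insert (p ^ i) ?A)"
        unfolding A_def q_def S_f_def using fA piA by simp
      also have "\<dots> \<le> sum f ?N" using AN piN fN by (intro sum_mono2) auto
      finally have AqN: "A + q \<le> S_f f (n * p ^ k)" unfolding S_f_def .
      have "A + 1 \<le> S_f f (n * p ^ k)" using AqN qpos[of i] q_def by simp
      then obtain D where D: "D \<subseteq> ?N" "A + 1 = sum f D"
        using FN unfolding f_practical_def by auto
      have fD: "finite D" using D(1) fN finite_subset by blast
      have zero: "f x = 0" if x: "x \<in> D - ?A" for x
      proof (rule ccontr)
        assume fx: "f x \<noteq> 0"
        have "x dvd n * p ^ k" using x D(1) by auto
        then obtain y j where yj: "y dvd n" "j \<le> k" "x = y * p ^ j"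
          using decomp[OF pr cp] by blast
        have ji: "i \<le> j"
        proof (rule ccontr)
          assume "\<not> i \<le> j"
          hence "p ^ j dvd p ^ (i - 1)" by (simp add: le_imp_power_dvd)
          hence "x dvd n * p ^ (i - 1)" using yj by (simp add: mult_dvd_mono)
          thus False using x by simp
        qed
        have y0: "y > 0" using yj(1) n0 by (metis dvd_0_left_iff gr0I not_gr0)
        have "coprime y (p ^ j)" using yj(1) cp
          by (metis coprime_commute coprime_power_right_iff coprime_imp_coprime dvd_trans)
        hence fxy: "f x = f y * f (p ^ j)"
          using mf y0 pp yj(3) unfolding multiplicative_def by simp
        hence "f y \<ge> 1" using fx by (cases "f y") auto
        hence "f (p ^ j) \<le> f x" using fxy by simp
        moreover have "q \<le> f (p ^ j)" using fmono[OF assms(2) pr ji] q_def by simp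
        moreover have "f x \<le> sum f D" using fD x by (intro member_le_sum) auto
        ultimately show False using nle D(2) unfolding A_def q_def by linarith
      qed
      have e1: "sum f D = sum f (D \<inter> ?A) + sum f (D - ?A)"
        by (rule sum.Int_Diff[OF fD])
      have e2: "sum f (D - ?A) = 0"
      proof (rule sum.neutral)
        show "\<forall>x\<in>D - ?A. f x = 0" using zero by blast
      qed
      have e3: "sum f (D \<inter> ?A) \<le> sum f ?A"
        by (rule sum_mono2[OF fA]) auto
      have e4: "sum f ?A = A" unfolding A_def S_f_def by simp
      show False using e1 e2 e3 e4 D(2) by linarith
    qed
  next
    assume H: "\<forall>i. 1 \<le> i \<and> i \<le> k \<longrightarrow> f (p ^ i) \<le> S_f f (n * p ^ (i - 1)) + 1"
    have "i \<le> k \<longrightarrow> f_practical f (n * p ^ i)" for i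
    proof (induction i)
      case 0 thus ?case using fn by simp
    next
      case (Suc i)
      show ?case
      proof
        assume "Suc i \<le> k"
        hence ik: "i \<le> k" by simp
        have a1: "f_practical f (n * p ^ (Suc i - 1))" using Suc.IH ik by simp
        have a2: "f (p ^ Suc i) \<le> S_f f (n * p ^ (Suc i - 1)) + 1"
          by (rule H[rule_format]) (use \<open>Suc i \<le> k\<close> in simp)
        have a0: "1 \<le> Suc i" by simp
        show "f_practical f (n * p ^ Suc i)"
          by (rule step[OF mf pr cp a0 fn a1 a2 qpos])
      qed
    qed
    thus "f_practical f (n * p ^ k)" by simp
  qed
qed

end
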